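(* Let $\Sigma$ be an alphabet with $|\Sigma|=1$ and let $L\subseteq\Sigma^*$ be a language satisfying the Pumping Lemma for context-free languages, i.e. the property $\mathit{PL}(L)$ below holds. Then $L$ is a regular language. Here $\mathit{PL}(L)$ is the property: there exists $n>0$ such that for every $z\in L$ with $|z|\ge n$ there exist $u,v,w,x,y\in\Sigma^*$ such that (1) $z=uvwxy$, (2) $vx\neq\varepsilon$, (3) $|vwx|\le n$, and (4) for all $i\ge 0$, $u v^i w x^i y\in L$.
   Context: For a word $w$, $|w|$ denotes its length, $w^0=\varepsilon$ is the empty word and $w^{i+1}=w^i w$. No assumption is made that $L$ is context-free; only the property $\mathit{PL}(L)$ is assumed. *)

theory Defs
  imports Main
begin

definition wpow :: "'a list \<Rightarrow> nat \<Rightarrow> 'a list" where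
  "wpow w i = concat (replicate i w)"

definition conc :: "'a list set \<Rightarrow> 'a list set \<Rightarrow> 'a list set" where
  "conc A B = {xs @ ys | xs ys. xs \<in> A \<and> ys \<in> B}"

inductive_set star :: "'a list set \<Rightarrow> 'a list set" for A :: "'a list set" where
  star_Nil: "[] \<in> star A"
| star_app: "xs \<in> A \<Longrightarrow> ys \<in> star A \<Longrightarrow> xs @ ys \<in> star A"

datatype 'a rexp = Zero | One | Atom 'a | Plus "'a rexp" "'a rexp"
  | Times "'a rexp" "'a rexp" | Star "'a rexp"

primrec lang :: "'a rexp \<Rightarrow> 'a list set" where
  "lang Zero = {}"
| "lang One = {[]}"
| "lang (Atom a) = {[a]}"
| "lang (Plus r s) = lang r \<union> lang s"
| "lang (Times r s) = conc (lang r) (lang s)"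
| "lang (Star r) = star (lang r)"

definition regular_over :: "'a set \<Rightarrow> 'a list set \<Rightarrow> bool" where
  "regular_over \<Sigma> L \<longleftrightarrow> (\<exists>r. set_rexp r \<subseteq> \<Sigma> \<and> lang r = L)"

definition PL :: "'a set \<Rightarrow> 'a list set \<Rightarrow> bool" where
  "PL \<Sigma> L \<longleftrightarrow> (\<exists>n>0. \<forall>z\<in>L. length z \<ge> n \<longrightarrow>
     (\<exists>u v w x y. u \<in> lists \<Sigma> \<and> v \<in> lists \<Sigma> \<and> w \<in> lists \<Sigma> \<and> x \<in> lists \<Sigma> \<and> y \<in> lists \<Sigma> \<and>
        z = u @ v @ w @ x @ y \<and> v @ x \<noteq> [] \<and> length (v @ w @ x) \<le> n \<and>
        (\<forall>i. u @ wpow v i @ w @ wpow x i @ y \<in> L)))"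

end

theory Submission
  imports Defs
begin

fun rword :: "'a \<Rightarrow> nat \<Rightarrow> 'a rexp" where
  "rword a 0 = One"
| "rword a (Suc k) = Times (Atom a) (rword a k)"

lemma lang_rword: "lang (rword a k) = {replicate k a}"
  by (induction k) (auto simp: conc_def)

lemma set_rword: "set_rexp (rword a k) \<subseteq> {a}"
  by (induction k) auto

lemma star_rep: "star {replicate N a} = range (\<lambda>j. replicate (j*N) a)"
proof
  show "star {replicate N a} \<subseteq> range (\<lambda>j. replicate (j*N) a)"
  proof
    fix w assume "w \<in> star {replicate N a}"
    then show "w \<in> range (\<lambda>j. replicate (j*N) a)"
    proof (induction rule: star.induct)
      case star_Nil
      then show ?case by (auto intro: range_eqI[where x=0])
    next
      case (star_app xs ys)
      then obtain j where "ys = replicate (j*N) a" by auto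
      with star_app have "xs @ ys = replicate (Suc j * N) a" by (simp add: replicate_add)
      then show ?case by blast
    qed
  qed
next
  have "replicate (j*N) a \<in> star {replicate N a}" for j
  proof (induction j)
    case 0 then show ?case by (simp add: star.star_Nil)
  next
    case (Suc j)
    have "replicate (Suc j * N) a = replicate N a @ replicate (j*N) a" by (simp add: replicate_add)
    with Suc show ?case using star.star_app[of "replicate N a" "{replicate N a}"] by simp
  qed
  then show "range (\<lambda>j. replicate (j*N) a) \<subseteq> star {replicate N a}" by auto
qed

lemma reg_prog: "regular_over {a} (range (\<lambda>j. replicate (g + j*N) a))"
proof -
  have "lang (Times (rword a g) (Star (rword a N))) = range (\<lambda>j. replicate (g + j*N) a)"
    by (auto simp: lang_rword star_rep conc_def replicate_add)
  moreover have "set_rexp (Times (rword a g) (Star (rword a N))) \<subseteq> {a}"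
    using set_rword[of a g] set_rword[of a N] by auto
  ultimately show ?thesis unfolding regular_over_def
    by (intro exI[of _ "Times (rword a g) (Star (rword a N))"]) simp
qed

lemma reg_single: "regular_over {a} {replicate k a}"
  unfolding regular_over_def
  by (intro exI[of _ "rword a k"]) (simp add: lang_rword set_rword)

lemma reg_Un: "regular_over S A \<Longrightarrow> regular_over S B \<Longrightarrow> regular_over S (A \<union> B)"
proof -
  assume "regular_over S A" "regular_over S B"
  then obtain r1 r2 where "set_rexp r1 \<subseteq> S" "lang r1 = A" "set_rexp r2 \<subseteq> S" "lang r2 = B"
    unfolding regular_over_def by blast
  then show ?thesis unfolding regular_over_def by (intro exI[of _ "Plus r1 r2"]) auto
qed

lemma reg_UN: "finite I \<Longrightarrow> (\<And>x. x \<in> I \<Longrightarrow> regular_over S (f x)) \<Longrightarrow> regular_over S (\<Union>x\<in>I. f x)"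
proof (induction I rule: finite_induct)
  case empty
  then show ?case unfolding regular_over_def by (intro exI[of _ Zero]) auto
next
  case (insert x F)
  then show ?case by (simp add: reg_Un)
qed

lemma len_wpow: "length (wpow v i) = i * length v"
  by (simp add: wpow_def length_concat sum_list_replicate)

lemma set_wpow: "set (wpow v i) \<subseteq> set v"
  by (auto simp: wpow_def)

lemma lists_single: "w \<in> lists {a} \<Longrightarrow> w = replicate (length w) a"
  by (induction w) auto

theorem theorem1:
  fixes \<Sigma> :: "'a set" and L :: "'a list set"
  assumes "card \<Sigma> = 1"
    and "L \<subseteq> lists \<Sigma>"
    and "PL \<Sigma> L"
  shows "regular_over \<Sigma> L"
proof -
  obtain a where Sa: "\<Sigma> = {a}" using assms(1) card_1_singletonE by blast
  have LL: "L \<subseteq> lists {a}" using assms(2) Sa by simp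
  obtain n where n0: "n > 0" and P: "\<forall>z\<in>L. length z \<ge> n \<longrightarrow>
     (\<exists>u v w x y. u \<in> lists \<Sigma> \<and> v \<in> lists \<Sigma> \<and> w \<in> lists \<Sigma> \<and> x \<in> lists \<Sigma> \<and> y \<in> lists \<Sigma> \<and>
        z = u @ v @ w @ x @ y \<and> v @ x \<noteq> [] \<and> length (v @ w @ x) \<le> n \<and>
        (\<forall>i. u @ wpow v i @ w @ wpow x i @ y \<in> L))"
    using assms(3) unfolding PL_def by blast
  have key: "\<exists>p. 0 < p \<and> p \<le> n \<and> (\<forall>k. replicate (m + k*p) a \<in> L)"
    if m: "replicate m a \<in> L" "m \<ge> n" for m
  proof -
    have ex: "\<exists>u v w x y. u \<in> lists \<Sigma> \<and> v \<in> lists \<Sigma> \<and> w \<in> lists \<Sigma> \<and> x \<in> lists \<Sigma> \<and> y \<in> lists \<Sigma> \<and>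
        replicate m a = u @ v @ w @ x @ y \<and> v @ x \<noteq> [] \<and> length (v @ w @ x) \<le> n \<and>
        (\<forall>i. u @ wpow v i @ w @ wpow x i @ y \<in> L)"
      using P m(1) m(2) by (simp only: length_replicate)
    from ex obtain u v w x y where uv: "u \<in> lists \<Sigma>" "v \<in> lists \<Sigma>" "w \<in> lists \<Sigma>" "x \<in> lists \<Sigma>" "y \<in> lists \<Sigma>"
      and z: "replicate m a = u @ v @ w @ x @ y" and ne: "v @ x \<noteq> []"
      and le: "length (v @ w @ x) \<le> n" and pump: "\<forall>i. u @ wpow v i @ w @ wpow x i @ y \<in> L"
      by blast
    define p where "p = length v + length x"
    have p0: "0 < p" using ne p_def by auto
    have pn: "p \<le> n" using le p_def by simp
    have "replicate (m + k*p) a \<in> L" for k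
    proof -
      let ?w = "u @ wpow v (Suc k) @ w @ wpow x (Suc k) @ y"
      have "?w \<in> L" using pump by blast
      hence "?w \<in> lists {a}" using LL by blast
      hence "?w = replicate (length ?w) a" by (rule lists_single)
      moreover have "length ?w = m + k*p"
        using arg_cong[OF z, of length] by (simp add: len_wpow p_def algebra_simps)
      ultimately have "?w = replicate (m + k*p) a" by simp
      with \<open>?w \<in> L\<close> show ?thesis by simp
    qed
    with p0 pn show ?thesis by blast
  qed
  define N :: nat where "N = fact n"
  have N0: "N > 0" unfolding N_def by simp
  have clos: "replicate (m + j*N) a \<in> L" if m: "replicate m a \<in> L" "m \<ge> n" for m j
  proof -
    obtain p where p: "0 < p" "p \<le> n" "\<forall>k. replicate (m + k*p) a \<in> L" using key[OF m] by blast
    have "p dvd N" unfolding N_def using p by (simp add: dvd_fact)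
    then obtain q where "N = p * q" by (auto elim: dvdE)
    hence e: "m + j*N = m + (j*q)*p" by simp
    from p(3) have "replicate (m + (j*q)*p) a \<in> L" by blast
    then show ?thesis by (simp only: e)
  qed
  define S where "S = {k. replicate k a \<in> L}"
  define C where "C r = {m \<in> S. m \<ge> n \<and> m mod N = r}" for r
  define G where "G = (\<lambda>r. LEAST m. m \<in> C r) ` {r. r < N \<and> C r \<noteq> {}}"
  have finG: "finite G" unfolding G_def by simp
  have LS: "L = (\<Union>s\<in>{s\<in>S. s < n}. {replicate s a}) \<union> (\<Union>g\<in>G. range (\<lambda>j. replicate (g + j*N) a))" (is "_ = ?R")
  proof
    show "L \<subseteq> ?R"
    proof
      fix z assume z: "z \<in> L"
      define s where "s = length z"
      have "z \<in> lists {a}" using z LL by blast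
      hence zs: "z = replicate s a" unfolding s_def by (rule lists_single)
      have sS: "s \<in> S" using z zs S_def by simp
      show "z \<in> ?R"
      proof (cases "s < n")
        case True then show ?thesis using sS zs by blast
      next
        case False
        define r where "r = s mod N"
        have sC: "s \<in> C r" using False sS unfolding C_def r_def by simp
        define g where "g = (LEAST m. m \<in> C r)"
        have gC: "g \<in> C r" unfolding g_def using sC by (rule LeastI)
        have gs: "g \<le> s" unfolding g_def using sC by (rule Least_le)
        have gG: "g \<in> G" unfolding G_def g_def using sC N0 r_def by auto
        have "g mod N = s mod N" using gC unfolding C_def r_def by simp
        hence "N dvd s - g" using mod_eq_dvd_iff_nat[OF gs, of N] by simp
        then obtain q where "s - g = N * q" by (auto elim: dvdE)
        hence "s = g + q * N" using gs by (simp add: mult.commute)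
        thus ?thesis using gG zs by blast
      qed
    qed
  next
    show "?R \<subseteq> L"
    proof
      fix z assume "z \<in> ?R"
      then consider "\<exists>s\<in>S. z = replicate s a" | "\<exists>g\<in>G. \<exists>j. z = replicate (g + j*N) a" by blast
      then show "z \<in> L"
      proof cases
        case 1 then show ?thesis using S_def by auto
      next
        case 2
        then obtain g j where gG: "g \<in> G" and zj: "z = replicate (g + j*N) a" by blast
        from gG obtain r where "C r \<noteq> {}" and gd: "g = (LEAST m. m \<in> C r)" unfolding G_def by auto
        then have "g \<in> C r" unfolding gd by (auto intro: LeastI)
        hence "replicate g a \<in> L" "g \<ge> n" unfolding C_def S_def by auto
        thus ?thesis using clos zj by blast
      qed
    qed
  qed
  have "regular_over {a} L"
    unfolding LS
    apply (rule reg_Un)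
    apply (rule reg_UN) apply simp apply (rule reg_single)
    apply (rule reg_UN) apply (rule finG) apply (rule reg_prog)
    done
  thus ?thesis using Sa by simp
qed

end
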